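(* Let $(\mathcal{K},[\cdot,\cdot])$ be a Krein space with fundamental symmetry $J$, let $\{k_n\}_{n\in\mathbb{N}}$ be a frame for the Krein space $\mathcal{K}$, and let $S$ be its frame operator. Then: (i) $\{S^{-1}k_n\}_{n}$ is a dual frame of $\{k_n\}_n$ for the Krein space $\mathcal{K}$; (ii) $\{JS^{-1}k_n\}_n$ is a dual frame of $\{Jk_n\}_n$ for the Krein space $\mathcal{K}$; (iii) $\{JS^{-1}k_n\}_n$ is a dual frame of $\{k_n\}_n$ for the Hilbert space $(\mathcal{K},[\cdot,\cdot]_J)$; (iv) $\{S^{-1}k_n\}_n$ is a dual frame of $\{Jk_n\}_n$ for the Hilbert space $(\mathcal{K},[\cdot,\cdot]_J)$. Moreover, if $0<A\leq B<\infty$ are frame bounds for $\{k_n\}_n$ (as a frame for the Krein space $\mathcal{K}$), then all these dual frames admit the frame bounds $0<B^{-1}\leq A^{-1}<\infty$.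
   Context: A Krein space $(\mathcal{K},[\cdot,\cdot])$ has a fundamental decomposition $\mathcal{K}=\mathcal{K}_+\oplus\mathcal{K}_-$ and fundamental symmetry $J(k^++k^-)=k^+-k^-$, such that $[h,k]_J:=[h,Jk]$ makes $\mathcal{K}$ a Hilbert space; $\|k\|_J:=\sqrt{[k,k]_J}$. A countable sequence $\{k_n\}$ is a frame for the Krein space $\mathcal{K}$ with frame bounds $A\le B$ if $A\|k\|_J^2\leq\sum_n|[k_n,k]|^2\leq B\|k\|_J^2$ for all $k$; a frame for the Hilbert space $(\mathcal{K},[\cdot,\cdot]_J)$ is defined likewise with $[k_n,k]_J$ in place of $[k_n,k]$. The frame operator of a frame $\{k_n\}$ for the Krein space $\mathcal{K}$ is $S=T\tilde JT^*$ where $T:\mathfrak{k}_2(\mathbb{N})\to\mathcal{K}$, $T(\alpha_n)=\sum\alpha_nk_n$, $\mathfrak{k}_2(\mathbb{N})$ is $\ell_2(\mathbb{N})$ with a Krein inner product whose fundamental symmetry $\tilde J$ makes $[\cdot,\cdot]_{\tilde J}$ the standard $\ell_2$ inner product, and $T^*$ is the Krein adjoint; equivalently $Sk=\sum_n[k_n,k]k_n$. $S$ is invertible with bounded inverse. A dual frame of a frame $\{k_n\}$ for the Krein space $\mathcal{K}$ is a frame $\{h_n\}$ for the Krein space $\mathcal{K}$ with $k=\sum_n[h_n,k]k_n$ for all $k\in\mathcal{K}$. A dual frame of a frame $\{f_n\}$ for the Hilbert space $(\mathcal{K},[\cdot,\cdot]_J)$ is a frame $\{g_n\}$ for that Hilbert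 space with $k=\sum_n[g_n,k]_Jf_n=\sum_n[f_n,k]_Jg_n$ for all $k$. *)

theory Defs
  imports "HOL-Analysis.Analysis"
begin

text \<open>A complex Hilbert space is modelled as a real Hilbert space (type class
real_inner + complete_space) together with a complex structure Iop
(multiplication by the imaginary unit): a real-linear isometry with Iop o Iop = -id.\<close>

definition complex_structure :: "('a::real_inner \<Rightarrow> 'a) \<Rightarrow> bool" where
  "complex_structure Iop \<longleftrightarrow> linear Iop \<and> (\<forall>x. Iop (Iop x) = - x)
     \<and> (\<forall>x y. inner (Iop x) (Iop y) = inner x y)"

definition scaleC_cs :: "('a::real_vector \<Rightarrow> 'a) \<Rightarrow> complex \<Rightarrow> 'a \<Rightarrow> 'a" where
  "scaleC_cs Iop c x = Re c *\<^sub>R x + Im c *\<^sub>R Iop x"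

text \<open>complex Hilbert inner product [x,y]_J (conjugate-linear in x, linear in y)\<close>
definition cinner_cs :: "('a::real_inner \<Rightarrow> 'a) \<Rightarrow> 'a \<Rightarrow> 'a \<Rightarrow> complex" where
  "cinner_cs Iop x y = Complex (inner x y) (inner (Iop x) y)"

text \<open>Krein space with Krein inner product kip and fundamental symmetry J:
J is a complex-linear involution, kip is Hermitian, and kip x (J y) is the
Hilbert inner product of the type.  (Then K+ = {x. J x = x}, K- = {x. J x = -x}
is a fundamental decomposition with J(k+ + k-) = k+ - k-.)\<close>
definition krein_space ::
  "('a::{real_inner,complete_space} \<Rightarrow> 'a) \<Rightarrow> ('a \<Rightarrow> 'a \<Rightarrow> complex) \<Rightarrow> ('a \<Rightarrow> 'a) \<Rightarrow> bool" where
  "krein_space Iop kip J \<longleftrightarrow> complex_structure Iop \<and> linear J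
     \<and> (\<forall>x. J (Iop x) = Iop (J x)) \<and> (\<forall>x. J (J x) = x)
     \<and> (\<forall>x y. kip y x = cnj (kip x y))
     \<and> (\<forall>x y. kip x (J y) = cinner_cs Iop x y)"

text \<open>Frame for the Krein space with bounds A, B (norm = J-norm)\<close>
definition krein_frame_bounds ::
  "('a::real_inner \<Rightarrow> 'a \<Rightarrow> complex) \<Rightarrow> (nat \<Rightarrow> 'a) \<Rightarrow> real \<Rightarrow> real \<Rightarrow> bool" where
  "krein_frame_bounds kip k A B \<longleftrightarrow> 0 < A \<and> A \<le> B \<and>
     (\<forall>x. summable (\<lambda>n. (cmod (kip (k n) x))\<^sup>2)
        \<and> A * (norm x)\<^sup>2 \<le> (\<Sum>n. (cmod (kip (k n) x))\<^sup>2)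
        \<and> (\<Sum>n. (cmod (kip (k n) x))\<^sup>2) \<le> B * (norm x)\<^sup>2)"

definition krein_frame :: "('a::real_inner \<Rightarrow> 'a \<Rightarrow> complex) \<Rightarrow> (nat \<Rightarrow> 'a) \<Rightarrow> bool" where
  "krein_frame kip k \<longleftrightarrow> (\<exists>A B. krein_frame_bounds kip k A B)"

definition hilbert_frame_bounds ::
  "('a::real_inner \<Rightarrow> 'a) \<Rightarrow> (nat \<Rightarrow> 'a) \<Rightarrow> real \<Rightarrow> real \<Rightarrow> bool" where
  "hilbert_frame_bounds Iop k A B \<longleftrightarrow> krein_frame_bounds (cinner_cs Iop) k A B"

definition hilbert_frame :: "('a::real_inner \<Rightarrow> 'a) \<Rightarrow> (nat \<Rightarrow> 'a) \<Rightarrow> bool" where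
  "hilbert_frame Iop k \<longleftrightarrow> (\<exists>A B. hilbert_frame_bounds Iop k A B)"

definition frame_op ::
  "('a::{real_normed_vector} \<Rightarrow> 'a) \<Rightarrow> ('a \<Rightarrow> 'a \<Rightarrow> complex) \<Rightarrow> (nat \<Rightarrow> 'a) \<Rightarrow> 'a \<Rightarrow> 'a" where
  "frame_op Iop kip k x = (\<Sum>n. scaleC_cs Iop (kip (k n) x) (k n))"

definition krein_dual_frame ::
  "('a::real_inner \<Rightarrow> 'a) \<Rightarrow> ('a \<Rightarrow> 'a \<Rightarrow> complex) \<Rightarrow> (nat \<Rightarrow> 'a) \<Rightarrow> (nat \<Rightarrow> 'a) \<Rightarrow> bool" where
  "krein_dual_frame Iop kip h k \<longleftrightarrow> krein_frame kip h \<and>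
     (\<forall>x. (\<lambda>n. scaleC_cs Iop (kip (h n) x) (k n)) sums x)"

definition hilbert_dual_frame ::
  "('a::real_inner \<Rightarrow> 'a) \<Rightarrow> (nat \<Rightarrow> 'a) \<Rightarrow> (nat \<Rightarrow> 'a) \<Rightarrow> bool" where
  "hilbert_dual_frame Iop g f \<longleftrightarrow> hilbert_frame Iop g \<and>
     (\<forall>x. (\<lambda>n. scaleC_cs Iop (cinner_cs Iop (g n) x) (f n)) sums x
        \<and> (\<lambda>n. scaleC_cs Iop (cinner_cs Iop (f n) x) (g n)) sums x)"

end

theory Submission
  imports Defs
begin

section \<open>Complex structure basics\<close>

context
  fixes Iop :: "'a::{real_inner,complete_space} \<Rightarrow> 'a"
  assumes cs: "complex_structure Iop"
begin

lemma Iop_lin: "linear Iop" using cs unfolding complex_structure_def by blast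
lemma Iop_Iop[simp]: "Iop (Iop x) = - x" using cs unfolding complex_structure_def by blast
lemma Iop_inner[simp]: "inner (Iop x) (Iop y) = inner x y" using cs unfolding complex_structure_def by blast
lemma Iop_add: "Iop (x + y) = Iop x + Iop y" using Iop_lin by (simp add: linear_add)
lemma Iop_scaleR: "Iop (r *\<^sub>R x) = r *\<^sub>R Iop x" using Iop_lin by (simp add: linear_scale)
lemma Iop_minus: "Iop (- x) = - Iop x" using Iop_lin by (simp add: linear_neg)
lemma Iop_diff: "Iop (x - y) = Iop x - Iop y" using Iop_lin by (simp add: linear_diff)

lemma Iop_inner_left: "inner (Iop x) y = - inner x (Iop y)"
proof -
  have "inner (Iop (Iop x)) (Iop y) = inner (Iop x) y" by (rule Iop_inner)
  thus ?thesis by (simp only: Iop_Iop inner_minus_left)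
qed

lemma Iop_norm[simp]: "norm (Iop x) = norm x"
  by (simp add: norm_eq_sqrt_inner)

lemma Iop_bl: "bounded_linear Iop"
  by (rule bounded_linear_intro[where K=1]) (auto simp: Iop_add Iop_scaleR)

lemma cinner_add_right: "cinner_cs Iop u (x + y) = cinner_cs Iop u x + cinner_cs Iop u y"
  by (simp add: cinner_cs_def complex_eq_iff inner_add_right)

lemma cinner_scaleR_right: "cinner_cs Iop u (r *\<^sub>R x) = r *\<^sub>R cinner_cs Iop u x"
  by (simp add: cinner_cs_def complex_eq_iff)

lemma cinner_Iop_right: "cinner_cs Iop u (Iop x) = \<i> * cinner_cs Iop u x"
  by (simp add: cinner_cs_def complex_eq_iff Iop_inner_left)

lemma cinner_Iop_left: "cinner_cs Iop (Iop u) x = - \<i> * cinner_cs Iop u x"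
  by (simp add: cinner_cs_def complex_eq_iff Iop_inner_left)

lemma cinner_norm2: "(cmod (cinner_cs Iop u x))\<^sup>2 = (inner u x)\<^sup>2 + (inner (Iop u) x)\<^sup>2"
  by (simp add: cinner_cs_def cmod_power2)

lemma scaleC_inner: "inner (scaleC_cs Iop c u) x = inner c (cinner_cs Iop u x)"
  by (simp add: scaleC_cs_def cinner_cs_def inner_complex_def inner_add_left)

lemma scaleC_add: "scaleC_cs Iop (a + b) u = scaleC_cs Iop a u + scaleC_cs Iop b u"
  by (simp add: scaleC_cs_def algebra_simps)

lemma scaleC_Iop: "scaleC_cs Iop (\<i> * c) u = Iop (scaleC_cs Iop c u)"
  by (simp add: scaleC_cs_def Iop_add Iop_scaleR)

lemma scaleC_lin_comm:
  assumes "linear L" "\<And>x. L (Iop x) = Iop (L x)"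
  shows "L (scaleC_cs Iop c u) = scaleC_cs Iop c (L u)"
  using assms by (simp add: scaleC_cs_def linear_add linear_scale)

lemma inner_eqI: fixes u v :: 'a assumes "\<And>z. inner u z = inner v z" shows "u = v"
proof -
  have "inner (u - v) (u - v) = 0" using assms[of "u - v"] by (simp add: inner_diff_left)
  thus ?thesis by simp
qed

end


lemma my_summable_Cauchy:
  fixes f :: "nat \<Rightarrow> 'a::{real_normed_vector,complete_space}"
  assumes r: "\<forall>e>0. \<exists>N. \<forall>m\<ge>N. \<forall>n. norm (sum f {m..<n}) < e"
  shows "summable f"
    unfolding summable_iff_convergent Cauchy_convergent_iff [symmetric] Cauchy_iff
  proof clarify
    fix e :: real
    assume "0 < e"
    with r obtain N where N: "\<And>m n. m \<ge> N \<Longrightarrow> norm (sum f {m..<n}) < e"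
      by blast
    have "norm (sum f {..<m} - sum f {..<n}) < e" if "m\<ge>N" "n\<ge>N" for m n
    proof (cases m n rule: linorder_class.le_cases)
      assume "m \<le> n"
      then show ?thesis
        by (metis N finite_lessThan lessThan_minus_lessThan lessThan_subset_iff norm_minus_commute sum_diff \<open>m\<ge>N\<close>)
    next
      assume "n \<le> m"
      then show ?thesis
        by (metis N finite_lessThan lessThan_minus_lessThan lessThan_subset_iff sum_diff \<open>n\<ge>N\<close>)
    qed
    then show "\<exists>M. \<forall>m\<ge>M. \<forall>n\<ge>M. norm (sum f {..<m} - sum f {..<n}) < e"
      by blast
  qed

lemma my_comparison:
  fixes f :: "nat \<Rightarrow> 'a::{real_normed_vector,complete_space}"
  assumes N: "\<And>n. norm (f n) \<le> g n" and g: "summable g"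
  shows "summable f"
proof (rule my_summable_Cauchy, intro allI impI)
    fix e :: real
    assume "0 < e"
    then obtain Ng where Ng: "\<And>m n. m \<ge> Ng \<Longrightarrow> norm (sum g {m..<n}) < e" 
      using g by (fastforce simp: summable_Cauchy)
    with N have "norm (sum f {m..<n}) < e" if "m\<ge> Ng" for m n
    proof -
      have "norm (sum f {m..<n}) \<le> sum g {m..<n}"
        using N that by (force intro: sum_norm_le)
      also have "... \<le> norm (sum g {m..<n})"
        by simp
      also have "... < e"
        using Ng that by auto
      finally show ?thesis .
    qed
    then show "\<exists>N. \<forall>m\<ge>N. \<forall>n. norm (sum f {m..<n}) < e" 
      by blast
qed

lemma fin_CS:
  fixes a b :: "nat \<Rightarrow> complex"
  shows "(\<Sum>i\<in>F. inner (a i) (b i)) \<le> sqrt (\<Sum>i\<in>F. (cmod (a i))\<^sup>2) * sqrt (\<Sum>i\<in>F. (cmod (b i))\<^sup>2)"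
proof -
  have "(\<Sum>i\<in>F. inner (a i) (b i)) \<le> (\<Sum>i\<in>F. \<bar>cmod (a i)\<bar> * \<bar>cmod (b i)\<bar>)"
    by (intro sum_mono) (simp add: norm_cauchy_schwarz)
  also have "\<dots> \<le> L2_set (\<lambda>i. cmod (a i)) F * L2_set (\<lambda>i. cmod (b i)) F"
    by (rule L2_set_mult_ineq)
  finally show ?thesis by (simp add: L2_set_def)
qed

lemma inf_CS:
  fixes a b :: "nat \<Rightarrow> complex"
  assumes sa: "summable (\<lambda>n. (cmod (a n))\<^sup>2)" and sb: "summable (\<lambda>n. (cmod (b n))\<^sup>2)"
    and s: "(\<lambda>n. inner (a n) (b n)) sums t"
  shows "t \<le> sqrt (\<Sum>n. (cmod (a n))\<^sup>2) * sqrt (\<Sum>n. (cmod (b n))\<^sup>2)"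
proof (rule LIMSEQ_le_const2[OF s[unfolded sums_def]], intro exI allI impI)
  fix N :: nat
  have "(\<Sum>i<N. inner (a i) (b i)) \<le> sqrt (\<Sum>i<N. (cmod (a i))\<^sup>2) * sqrt (\<Sum>i<N. (cmod (b i))\<^sup>2)"
    by (rule fin_CS)
  also have "\<dots> \<le> sqrt (\<Sum>n. (cmod (a n))\<^sup>2) * sqrt (\<Sum>n. (cmod (b n))\<^sup>2)"
    by (intro mult_mono real_sqrt_le_mono sum_le_suminf sa sb) (auto intro: suminf_nonneg sa sum_nonneg)
  finally show "(\<Sum>i<N. inner (a i) (b i)) \<le> sqrt (\<Sum>n. (cmod (a n))\<^sup>2) * sqrt (\<Sum>n. (cmod (b n))\<^sup>2)" .
qed

section \<open>Hilbert frames\<close>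

context
  fixes Iop :: "'a::{real_inner,complete_space} \<Rightarrow> 'a" and f :: "nat \<Rightarrow> 'a" and A B :: real
  assumes cs: "complex_structure Iop" and fb: "hilbert_frame_bounds Iop f A B"
begin

lemma fb_pos: "0 < A" "A \<le> B" "0 < B"
  using fb unfolding hilbert_frame_bounds_def krein_frame_bounds_def by auto

lemma fb_summ: "summable (\<lambda>n. (cmod (cinner_cs Iop (f n) x))\<^sup>2)"
  using fb unfolding hilbert_frame_bounds_def krein_frame_bounds_def by auto

lemma fb_low: "A * (norm x)\<^sup>2 \<le> (\<Sum>n. (cmod (cinner_cs Iop (f n) x))\<^sup>2)"
  using fb unfolding hilbert_frame_bounds_def krein_frame_bounds_def by auto

lemma fb_up: "(\<Sum>n. (cmod (cinner_cs Iop (f n) x))\<^sup>2) \<le> B * (norm x)\<^sup>2"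
  using fb unfolding hilbert_frame_bounds_def krein_frame_bounds_def by auto

lemma bessel_fin:
  assumes "finite F"
  shows "norm (\<Sum>n\<in>F. scaleC_cs Iop (a n) (f n)) \<le> sqrt B * sqrt (\<Sum>n\<in>F. (cmod (a n))\<^sup>2)"
proof -
  define v where "v = (\<Sum>n\<in>F. scaleC_cs Iop (a n) (f n))"
  define X where "X = sqrt B * sqrt (\<Sum>n\<in>F. (cmod (a n))\<^sup>2)"
  have "(\<Sum>n\<in>F. (cmod (cinner_cs Iop (f n) v))\<^sup>2) \<le> (\<Sum>n. (cmod (cinner_cs Iop (f n) v))\<^sup>2)"
    by (rule sum_le_suminf[OF fb_summ assms]) simp
  also have "\<dots> \<le> B * (norm v)\<^sup>2" by (rule fb_up)
  finally have h1: "sqrt (\<Sum>n\<in>F. (cmod (cinner_cs Iop (f n) v))\<^sup>2) \<le> sqrt B * norm v"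
    using fb_pos by (metis norm_ge_zero real_sqrt_abs real_sqrt_le_mono real_sqrt_mult abs_of_nonneg)
  have "norm v * norm v = inner v v" by (simp add: power2_norm_eq_inner[symmetric] power2_eq_square)
  also have "\<dots> = (\<Sum>n\<in>F. inner (a n) (cinner_cs Iop (f n) v))"
  proof -
    have eq: "inner (\<Sum>n\<in>F. scaleC_cs Iop (a n) (f n)) w = (\<Sum>n\<in>F. inner (a n) (cinner_cs Iop (f n) w))" for w
      by (simp add: inner_sum_left scaleC_inner[OF cs])
    show ?thesis using eq[of v] by (simp only: v_def)
  qed
  also have "\<dots> \<le> sqrt (\<Sum>n\<in>F. (cmod (a n))\<^sup>2) * sqrt (\<Sum>n\<in>F. (cmod (cinner_cs Iop (f n) v))\<^sup>2)"
    by (rule fin_CS)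
  also have "\<dots> \<le> sqrt (\<Sum>n\<in>F. (cmod (a n))\<^sup>2) * (sqrt B * norm v)"
    by (intro mult_left_mono h1) (simp add: sum_nonneg)
  also have "\<dots> = X * norm v" by (simp add: X_def)
  finally have h2: "norm v * norm v \<le> X * norm v" .
  have "norm v \<le> X"
  proof (cases "norm v = 0")
    case True thus ?thesis using fb_pos by (simp add: X_def sum_nonneg)
  next
    case False thus ?thesis by (intro mult_right_le_imp_le[OF h2]) simp
  qed
  thus ?thesis by (simp add: v_def X_def)
qed

lemma synth_summable:
  assumes sa: "summable (\<lambda>n. (cmod (a n))\<^sup>2)"
  shows "summable (\<lambda>n. scaleC_cs Iop (a n) (f n))"
proof (rule my_summable_Cauchy, intro allI impI)
  fix e :: real assume e: "0 < e"
  have eB: "0 < e\<^sup>2 / B" using e fb_pos by simp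
  from sa[unfolded summable_Cauchy, rule_format, OF eB]
  obtain N where N: "\<And>m n. m \<ge> N \<Longrightarrow> norm (\<Sum>i\<in>{m..<n}. (cmod (a i))\<^sup>2) < e\<^sup>2 / B" by blast
  show "\<exists>N. \<forall>m\<ge>N. \<forall>n. norm (\<Sum>i\<in>{m..<n}. scaleC_cs Iop (a i) (f i)) < e"
  proof (intro exI allI impI)
    fix m n assume "m \<ge> N"
    hence lt: "(\<Sum>i\<in>{m..<n}. (cmod (a i))\<^sup>2) < e\<^sup>2 / B" using N[of m n] by (simp add: sum_nonneg)
    have "sqrt (\<Sum>i\<in>{m..<n}. (cmod (a i))\<^sup>2) < sqrt (e\<^sup>2 / B)" using lt by simp
    also have "\<dots> = e / sqrt B" using e fb_pos by (simp add: real_sqrt_divide)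
    finally have "sqrt B * sqrt (\<Sum>i\<in>{m..<n}. (cmod (a i))\<^sup>2) < sqrt B * (e / sqrt B)"
      by (rule mult_strict_left_mono) (use fb_pos in auto)
    also have "\<dots> = e" using fb_pos by simp
    finally show "norm (\<Sum>i\<in>{m..<n}. scaleC_cs Iop (a i) (f i)) < e"
      using bessel_fin[of "{m..<n}" a] by simp
  qed
qed

lemma synth_norm:
  assumes sa: "summable (\<lambda>n. (cmod (a n))\<^sup>2)"
  shows "norm (\<Sum>n. scaleC_cs Iop (a n) (f n)) \<le> sqrt B * sqrt (\<Sum>n. (cmod (a n))\<^sup>2)"
proof -
  have "(\<lambda>N. norm (\<Sum>n<N. scaleC_cs Iop (a n) (f n))) \<longlonglongrightarrow> norm (\<Sum>n. scaleC_cs Iop (a n) (f n))"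
    by (intro tendsto_norm summable_LIMSEQ synth_summable sa)
  moreover have "\<forall>N. norm (\<Sum>n<N. scaleC_cs Iop (a n) (f n)) \<le> sqrt B * sqrt (\<Sum>n. (cmod (a n))\<^sup>2)"
  proof
    fix N
    have "norm (\<Sum>n<N. scaleC_cs Iop (a n) (f n)) \<le> sqrt B * sqrt (\<Sum>n<N. (cmod (a n))\<^sup>2)"
      by (rule bessel_fin) simp
    also have "\<dots> \<le> sqrt B * sqrt (\<Sum>n. (cmod (a n))\<^sup>2)"
      using fb_pos by (intro mult_left_mono real_sqrt_le_mono sum_le_suminf sa) auto
    finally show "norm (\<Sum>n<N. scaleC_cs Iop (a n) (f n)) \<le> sqrt B * sqrt (\<Sum>n. (cmod (a n))\<^sup>2)" .
  qed
  ultimately show ?thesis by (intro LIMSEQ_le_const2) auto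
qed

abbreviation "Sop \<equiv> frame_op Iop (cinner_cs Iop) f"

lemma S_sums: "(\<lambda>n. scaleC_cs Iop (cinner_cs Iop (f n) x) (f n)) sums Sop x"
  unfolding frame_op_def by (intro summable_sums synth_summable fb_summ)

lemma S_inner_sums: "(\<lambda>n. inner (cinner_cs Iop (f n) x) (cinner_cs Iop (f n) y)) sums inner (Sop x) y"
  using bounded_linear.sums[OF bounded_linear_inner_left[of y] S_sums[of x]]
  by (simp add: scaleC_inner[OF cs])

lemma S_quad: "inner (Sop x) x = (\<Sum>n. (cmod (cinner_cs Iop (f n) x))\<^sup>2)"
  using sums_unique[OF S_inner_sums[of x x]] by (simp add: power2_norm_eq_inner)

lemma S_low: "A * (norm x)\<^sup>2 \<le> inner (Sop x) x" using fb_low S_quad by simp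
lemma S_up: "inner (Sop x) x \<le> B * (norm x)\<^sup>2" using fb_up S_quad by simp

lemma S_sym: "inner (Sop x) y = inner x (Sop y)"
proof -
  have "inner (Sop x) y = (\<Sum>n. inner (cinner_cs Iop (f n) x) (cinner_cs Iop (f n) y))"
    by (rule sums_unique[OF S_inner_sums])
  also have "\<dots> = (\<Sum>n. inner (cinner_cs Iop (f n) y) (cinner_cs Iop (f n) x))"
    by (simp add: inner_commute)
  also have "\<dots> = inner (Sop y) x" by (rule sums_unique[OF S_inner_sums, symmetric])
  finally show ?thesis by (simp add: inner_commute)
qed

lemma S_add: "Sop (x + y) = Sop x + Sop y"
  by (rule inner_eqI[OF cs]) (simp add: S_sym inner_add_left inner_add_right)

lemma S_scaleR: "Sop (r *\<^sub>R x) = r *\<^sub>R Sop x"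
  by (rule inner_eqI[OF cs]) (simp add: S_sym)

lemma S_lin: "linear Sop" by (rule linearI) (simp_all add: S_add S_scaleR)

lemma S_Iop: "Sop (Iop x) = Iop (Sop x)"
proof (rule inner_eqI[OF cs])
  fix z
  have "inner (Sop (Iop x)) z = (\<Sum>n. inner (cinner_cs Iop (f n) (Iop x)) (cinner_cs Iop (f n) z))"
    by (rule sums_unique[OF S_inner_sums])
  also have "\<dots> = (\<Sum>n. - inner (cinner_cs Iop (f n) x) (cinner_cs Iop (f n) (Iop z)))"
    by (simp add: cinner_Iop_right[OF cs] inner_complex_def)
  also have "\<dots> = - inner (Sop x) (Iop z)"
    using sums_unique[OF sums_minus[OF S_inner_sums[of x "Iop z"]]] by simp
  also have "\<dots> = inner (Iop (Sop x)) z" by (simp add: Iop_inner_left[OF cs])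
  finally show "inner (Sop (Iop x)) z = inner (Iop (Sop x)) z" .
qed

lemma S_bound: "norm (Sop x) \<le> B * norm x"
proof -
  have "norm (Sop x) \<le> sqrt B * sqrt (\<Sum>n. (cmod (cinner_cs Iop (f n) x))\<^sup>2)"
    unfolding frame_op_def by (rule synth_norm[OF fb_summ])
  also have "\<dots> \<le> sqrt B * sqrt (B * (norm x)\<^sup>2)"
    using fb_pos by (intro mult_left_mono real_sqrt_le_mono fb_up) auto
  also have "\<dots> = B * norm x" using fb_pos
    by (simp add: real_sqrt_mult)
  finally show ?thesis .
qed

lemma S_bl: "bounded_linear Sop"
  by (rule bounded_linear_intro[where K=B]) (simp_all add: S_add S_scaleR S_bound mult.commute)

lemma S_low_norm: "A * norm x \<le> norm (Sop x)"
proof -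
  have "A * norm x * norm x \<le> norm (Sop x) * norm x"
    using S_low[of x] norm_cauchy_schwarz[of "Sop x" x] by (simp add: power2_eq_square mult.assoc)
  thus ?thesis by (cases "norm x = 0") (simp_all add: mult_right_le_imp_le)
qed

lemma S_inj: "inj Sop"
proof (rule injI)
  fix x y assume "Sop x = Sop y"
  hence "Sop (x - y) = 0" using S_lin by (simp add: linear_diff)
  hence "A * norm (x - y) \<le> 0" using S_low_norm[of "x - y"] by simp
  thus "x = y" using fb_pos by (simp add: mult_le_0_iff)
qed

lemma S_nonneg: "0 \<le> inner (Sop x) x"
  using S_low[of x] fb_pos by (meson mult_nonneg_nonneg order_trans zero_le_power2 less_imp_le)

lemma E_step:
  "inner (Sop (r - (1/B) *\<^sub>R Sop r)) (r - (1/B) *\<^sub>R Sop r) \<le> (1 - A/B) * inner (Sop r) r"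
proof -
  define s where "s = Sop r"
  define t where "t = 1 / B"
  define e where "e = inner (Sop r) r"
  define n2 where "n2 = inner s s"
  define q where "q = inner (Sop s) s"
  have t: "0 < t" using fb_pos by (simp add: t_def)
  have Sr: "Sop (r - t *\<^sub>R s) = s - t *\<^sub>R Sop s"
    using S_lin by (simp add: s_def linear_diff linear_scale)
  have Ssr: "inner (Sop s) r = n2" by (simp add: S_sym n2_def s_def)
  have "inner (Sop (r - t *\<^sub>R s)) (r - t *\<^sub>R s) = e - 2 * t * n2 + t\<^sup>2 * q"
    unfolding Sr using Ssr
    by (simp add: inner_diff_left inner_diff_right e_def s_def n2_def q_def inner_commute power2_eq_square algebra_simps)
  moreover have "q \<le> B * n2" using S_up[of s] by (simp add: q_def n2_def power2_norm_eq_inner)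
  hence "t\<^sup>2 * q \<le> t\<^sup>2 * (B * n2)" using t by (intro mult_left_mono) auto
  hence "t\<^sup>2 * q \<le> t * n2" using fb_pos by (simp add: t_def power2_eq_square)
  moreover have "A * e \<le> n2"
  proof -
    have e0: "0 \<le> e" using S_nonneg by (simp add: e_def)
    have ce: "e \<le> norm s * norm r" unfolding e_def s_def by (rule norm_cauchy_schwarz)
    have le: "A * (norm r)\<^sup>2 \<le> e" using S_low by (simp add: e_def)
    have "e * e \<le> (norm s * norm r) * (norm s * norm r)" using e0 ce by (intro mult_mono) auto
    hence "A * (e * e) \<le> (norm s)\<^sup>2 * (A * (norm r)\<^sup>2)" using fb_pos
      by (simp add: mult_left_mono power2_eq_square algebra_simps)
    also have "\<dots> \<le> (norm s)\<^sup>2 * e" using le by (intro mult_left_mono) auto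
    finally have h: "(A * e) * e \<le> n2 * e" by (simp add: n2_def power2_norm_eq_inner algebra_simps)
    show ?thesis
    proof (cases "e = 0")
      case True thus ?thesis by (simp add: n2_def)
    next
      case False hence "0 < e" using e0 by simp
      thus ?thesis using h by (simp add: mult_right_le_imp_le)
    qed
  qed
  hence "t * (A * e) \<le> t * n2" using t by (intro mult_left_mono) auto
  ultimately have "inner (Sop (r - t *\<^sub>R s)) (r - t *\<^sub>R s) \<le> e - t * (A * e)" by linarith
  also have "e - t * (A * e) = (1 - A/B) * e" by (simp add: t_def algebra_simps)
  finally show ?thesis by (simp add: s_def t_def e_def)
qed

lemma S_surj: "surj Sop"
proof -
  { fix z
    define R where "R = (\<lambda>r. r - (1/B) *\<^sub>R Sop r)"
    define rr where "rr = (\<lambda>k. (R ^^ k) z)"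
    define qq where "qq = 1 - A / B"
    have qq: "0 \<le> qq" "qq < 1" using fb_pos by (auto simp: qq_def field_simps)
    have rrS: "rr (Suc k) = R (rr k)" for k by (simp add: rr_def)
    have Ek: "inner (Sop (rr k)) (rr k) \<le> qq ^ k * inner (Sop z) z" for k
    proof (induction k)
      case 0 thus ?case by (simp add: rr_def)
    next
      case (Suc k)
      have "inner (Sop (rr (Suc k))) (rr (Suc k)) \<le> qq * inner (Sop (rr k)) (rr k)"
        unfolding rrS R_def qq_def by (rule E_step)
      also have "\<dots> \<le> qq * (qq ^ k * inner (Sop z) z)" using Suc qq by (intro mult_left_mono) auto
      finally show ?case by simp
    qed
    define C where "C = sqrt (B / A) * norm z"
    have nb: "norm (rr k) \<le> C * sqrt qq ^ k" for k
    proof -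
      have "A * (norm (rr k))\<^sup>2 \<le> qq ^ k * (B * (norm z)\<^sup>2)"
        using S_low[of "rr k"] Ek[of k] S_up[of z] qq
        by (meson order_trans mult_left_mono zero_le_power)
      hence "(norm (rr k))\<^sup>2 \<le> (B / A) * (norm z)\<^sup>2 * qq ^ k" using fb_pos
        by (simp add: field_simps)
      hence "sqrt ((norm (rr k))\<^sup>2) \<le> sqrt ((B / A) * (norm z)\<^sup>2 * qq ^ k)"
        by (rule real_sqrt_le_mono)
      moreover have "sqrt ((B / A) * (norm z)\<^sup>2 * qq ^ k) = C * sqrt qq ^ k"
        unfolding real_sqrt_mult real_sqrt_power C_def by simp
      ultimately show ?thesis by simp
    qed
    have sq: "summable (\<lambda>k. C * sqrt qq ^ k)"
      using qq by (intro summable_mult summable_geometric) simp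
    have srr: "summable rr" by (rule my_comparison[OF nb sq])
    have r0: "rr \<longlonglongrightarrow> 0" by (rule summable_LIMSEQ_zero[OF srr])
    have tel: "(\<lambda>k. rr k - rr (Suc k)) sums (rr 0 - 0)" by (rule telescope_sums'[OF r0])
    have eqk: "rr k - rr (Suc k) = Sop ((1/B) *\<^sub>R rr k)" for k
      by (simp add: rrS R_def S_scaleR)
    have "(\<lambda>k. Sop ((1/B) *\<^sub>R rr k)) = (\<lambda>k. rr k - rr (Suc k))" by (simp add: eqk)
    moreover have "rr 0 = z" by (simp add: rr_def)
    ultimately have "(\<lambda>k. Sop ((1/B) *\<^sub>R rr k)) sums z" using tel by simp
    moreover have "(\<lambda>k. Sop ((1/B) *\<^sub>R rr k)) sums Sop (\<Sum>k. (1/B) *\<^sub>R rr k)"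
      by (intro bounded_linear.sums[OF S_bl] summable_sums summable_scaleR_right srr)
    ultimately have "Sop (\<Sum>k. (1/B) *\<^sub>R rr k) = z" using sums_unique2 by blast
    hence "z \<in> range Sop" by (metis rangeI) }
  thus ?thesis by blast
qed

abbreviation "Gop \<equiv> inv Sop"

lemma S_G[simp]: "Sop (Gop y) = y" by (rule surj_f_inv_f[OF S_surj])
lemma G_S[simp]: "Gop (Sop x) = x" by (rule inv_f_f[OF S_inj])

lemma G_eqI: "Sop x = y \<Longrightarrow> Gop y = x" by auto

lemma G_add: "Gop (x + y) = Gop x + Gop y" by (rule G_eqI) (simp add: S_add)
lemma G_scaleR: "Gop (r *\<^sub>R x) = r *\<^sub>R Gop x" by (rule G_eqI) (simp add: S_scaleR)
lemma G_lin: "linear Gop" by (rule linearI) (simp_all add: G_add G_scaleR)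
lemma G_Iop: "Gop (Iop x) = Iop (Gop x)" by (rule G_eqI) (simp add: S_Iop)

lemma G_sym: "inner (Gop x) y = inner x (Gop y)"
proof -
  have "inner (Gop x) (Sop (Gop y)) = inner (Sop (Gop x)) (Gop y)" by (simp only: S_sym)
  thus ?thesis by simp
qed

lemma G_bound: "A * norm (Gop x) \<le> norm x" using S_low_norm[of "Gop x"] by simp

lemma G_bl: "bounded_linear Gop"
proof (rule bounded_linear_intro[where K="1/A"])
  fix x show "norm (Gop x) \<le> norm x * (1 / A)" using G_bound[of x] fb_pos by (simp add: field_simps)
qed (simp_all add: G_add G_scaleR)

lemma cinner_G: "cinner_cs Iop (Gop u) x = cinner_cs Iop u (Gop x)"
  by (simp add: cinner_cs_def complex_eq_iff G_sym flip: G_Iop)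

lemma scaleC_G: "Gop (scaleC_cs Iop c u) = scaleC_cs Iop c (Gop u)"
  by (rule scaleC_lin_comm[OF cs G_lin G_Iop])

lemma dual1: "(\<lambda>n. scaleC_cs Iop (cinner_cs Iop (Gop (f n)) x) (f n)) sums x"
  using S_sums[of "Gop x"] by (simp add: cinner_G)

lemma dual2: "(\<lambda>n. scaleC_cs Iop (cinner_cs Iop (f n) x) (Gop (f n))) sums x"
  using bounded_linear.sums[OF G_bl S_sums[of x]] by (simp add: scaleC_G)

lemma dual_quad: "(\<Sum>n. (cmod (cinner_cs Iop (Gop (f n)) x))\<^sup>2) = inner x (Gop x)"
  using S_quad[of "Gop x"] by (simp add: cinner_G inner_commute)

lemma dual_bounds: "hilbert_frame_bounds Iop (\<lambda>n. Gop (f n)) (1/B) (1/A)"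
  unfolding hilbert_frame_bounds_def krein_frame_bounds_def
proof (intro conjI allI)
  show "0 < 1/B" "1/B \<le> 1/A" using fb_pos by (auto simp: field_simps)
  fix x
  show "summable (\<lambda>n. (cmod (cinner_cs Iop (Gop (f n)) x))\<^sup>2)"
    using fb_summ[of "Gop x"] by (simp add: cinner_G)
  have "inner x (Gop x) \<le> norm x * norm (Gop x)" by (rule norm_cauchy_schwarz)
  also have "\<dots> \<le> norm x * (norm x / A)" using G_bound[of x] fb_pos
    by (intro mult_left_mono) (auto simp: field_simps)
  finally show "(\<Sum>n. (cmod (cinner_cs Iop (Gop (f n)) x))\<^sup>2) \<le> 1 / A * (norm x)\<^sup>2"
    by (subst dual_quad) (simp add: power2_eq_square)
  define g where "g = inner x (Gop x)"
  have g0: "0 \<le> g" using S_nonneg[of "Gop x"] by (simp add: g_def inner_commute)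
  have "(norm x)\<^sup>2 = inner (Sop (Gop x)) x" by (simp add: power2_norm_eq_inner)
  also have "\<dots> \<le> sqrt (\<Sum>n. (cmod (cinner_cs Iop (f n) (Gop x)))\<^sup>2) * sqrt (\<Sum>n. (cmod (cinner_cs Iop (f n) x))\<^sup>2)"
    by (rule inf_CS[OF fb_summ fb_summ S_inner_sums])
  also have "\<dots> \<le> sqrt g * sqrt (B * (norm x)\<^sup>2)"
  proof -
    have e1: "(\<Sum>n. (cmod (cinner_cs Iop (f n) (Gop x)))\<^sup>2) = g"
      using S_quad[of "Gop x"] by (simp add: g_def inner_commute)
    show ?thesis unfolding e1 by (intro mult_left_mono real_sqrt_le_mono fb_up) (simp add: g0)
  qed
  also have "\<dots> = (sqrt g * sqrt B) * norm x" by (simp add: real_sqrt_mult)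
  finally have h: "norm x * norm x \<le> (sqrt g * sqrt B) * norm x" by (simp add: power2_eq_square)
  have "norm x \<le> sqrt g * sqrt B"
  proof (cases "norm x = 0")
    case True thus ?thesis using g0 fb_pos by simp
  next
    case False thus ?thesis by (intro mult_right_le_imp_le[OF h]) simp
  qed
  hence "(norm x)\<^sup>2 \<le> (sqrt g * sqrt B)\<^sup>2" by (intro power_mono) auto
  hence "(norm x)\<^sup>2 \<le> g * B" using g0 fb_pos by (simp add: power_mult_distrib)
  hence "1 / B * (norm x)\<^sup>2 \<le> g" using fb_pos by (simp add: field_simps)
  thus "1 / B * (norm x)\<^sup>2 \<le> (\<Sum>n. (cmod (cinner_cs Iop (Gop (f n)) x))\<^sup>2)"
    by (simp add: dual_quad g_def)
qed

end

lemma kfb_transfer: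
  assumes "\<And>n x. p (h n) x = q (h' n) (T x)" and "\<And>x. norm (T x) = norm x" and "surj T"
  shows "krein_frame_bounds p h a b \<longleftrightarrow> krein_frame_bounds q h' a b"
proof -
  define P where "P y \<longleftrightarrow> summable (\<lambda>n. (cmod (q (h' n) y))\<^sup>2)
        \<and> a * (norm y)\<^sup>2 \<le> (\<Sum>n. (cmod (q (h' n) y))\<^sup>2)
        \<and> (\<Sum>n. (cmod (q (h' n) y))\<^sup>2) \<le> b * (norm y)\<^sup>2" for y
  have e: "(summable (\<lambda>n. (cmod (p (h n) x))\<^sup>2)
        \<and> a * (norm x)\<^sup>2 \<le> (\<Sum>n. (cmod (p (h n) x))\<^sup>2)
        \<and> (\<Sum>n. (cmod (p (h n) x))\<^sup>2) \<le> b * (norm x)\<^sup>2) \<longleftrightarrow> P (T x)" for x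
    unfolding P_def assms(1) assms(2) ..
  have "(\<forall>x. P (T x)) \<longleftrightarrow> (\<forall>y. P y)" using assms(3) by (metis surjD)
  thus ?thesis unfolding krein_frame_bounds_def e by (simp add: P_def)
qed

section \<open>Krein spaces\<close>

context
  fixes Iop :: "'a::{real_inner,complete_space} \<Rightarrow> 'a" and kip :: "'a \<Rightarrow> 'a \<Rightarrow> complex" and J :: "'a \<Rightarrow> 'a"
  assumes ks: "krein_space Iop kip J"
begin

lemma ks_cs: "complex_structure Iop" using ks unfolding krein_space_def by blast
lemma J_lin: "linear J" using ks unfolding krein_space_def by blast
lemma J_J[simp]: "J (J x) = x" using ks unfolding krein_space_def by blast
lemma J_Iop: "J (Iop x) = Iop (J x)" using ks unfolding krein_space_def by blast
lemma herm: "kip y x = cnj (kip x y)" using ks unfolding krein_space_def by blast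
lemma kipJ: "kip x (J y) = cinner_cs Iop x y" using ks unfolding krein_space_def by blast
lemma kip_cinner: "kip x y = cinner_cs Iop x (J y)" using kipJ[of x "J y"] by simp

lemma J_sym: "inner (J x) y = inner x (J y)"
proof -
  have "cinner_cs Iop y (J x) = cnj (cinner_cs Iop x (J y))" using herm[of y x] by (simp add: kip_cinner)
  hence "inner y (J x) = inner x (J y)" by (simp add: cinner_cs_def complex_eq_iff)
  thus ?thesis by (simp add: inner_commute)
qed

lemma J_inner[simp]: "inner (J x) (J y) = inner x y" by (simp add: J_sym)
lemma J_norm[simp]: "norm (J x) = norm x" by (simp add: norm_eq_sqrt_inner)
lemma J_surj: "surj J" by (metis J_J surjI)
lemma J_bl: "bounded_linear J"
  by (rule bounded_linear_intro[where K=1]) (use J_lin in \<open>simp_all add: linear_add linear_scale\<close>)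

lemma cinner_J: "cinner_cs Iop (J u) (J x) = cinner_cs Iop u x"
  by (simp add: cinner_cs_def complex_eq_iff flip: J_Iop)

lemma cinner_J_left: "cinner_cs Iop (J u) x = cinner_cs Iop u (J x)"
  using cinner_J[of u "J x"] by simp

lemma scaleC_J: "J (scaleC_cs Iop c u) = scaleC_cs Iop c (J u)"
  by (rule scaleC_lin_comm[OF ks_cs J_lin J_Iop])

lemma kfb_hfb: "krein_frame_bounds kip h a b \<longleftrightarrow> hilbert_frame_bounds Iop h a b"
  unfolding hilbert_frame_bounds_def
  by (rule kfb_transfer[where p=kip and q="cinner_cs Iop" and h=h and h'=h and T=J]) (simp_all add: kip_cinner J_surj)

lemma hfb_J: "hilbert_frame_bounds Iop (\<lambda>n. J (h n)) a b \<longleftrightarrow> hilbert_frame_bounds Iop h a b"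
  unfolding hilbert_frame_bounds_def
  by (rule kfb_transfer[where p="cinner_cs Iop" and q="cinner_cs Iop" and h="\<lambda>n. J (h n)" and h'=h and T=J])
    (simp_all add: cinner_J_left J_surj)

lemma main:
  assumes kb: "krein_frame_bounds kip k A B"
  defines "S \<equiv> frame_op Iop kip k"
  shows "krein_dual_frame Iop kip (\<lambda>n. inv S (k n)) k
       \<and> krein_dual_frame Iop kip (\<lambda>n. J (inv S (k n))) (\<lambda>n. J (k n))
       \<and> hilbert_dual_frame Iop (\<lambda>n. J (inv S (k n))) k
       \<and> hilbert_dual_frame Iop (\<lambda>n. inv S (k n)) (\<lambda>n. J (k n))
       \<and> krein_frame_bounds kip (\<lambda>n. inv S (k n)) (1 / B) (1 / A)
       \<and> krein_frame_bounds kip (\<lambda>n. J (inv S (k n))) (1 / B) (1 / A)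
       \<and> hilbert_frame_bounds Iop (\<lambda>n. J (inv S (k n))) (1 / B) (1 / A)
       \<and> hilbert_frame_bounds Iop (\<lambda>n. inv S (k n)) (1 / B) (1 / A)"
proof -
  note cs = ks_cs
  have fb: "hilbert_frame_bounds Iop k A B" using kb kfb_hfb by blast
  define G where "G = inv (frame_op Iop (cinner_cs Iop) k)"
  have Sx: "S x = frame_op Iop (cinner_cs Iop) k (J x)" for x
    by (simp add: S_def frame_op_def kip_cinner)
  have injS: "inj S"
  proof (rule injI)
    fix a b assume "S a = S b"
    hence "J a = J b" using S_inj[OF cs fb] Sx by (metis injD)
    thus "a = b" by (metis J_J)
  qed
  have invS: "inv S y = J (G y)" for y
    by (rule inv_f_eq[OF injS]) (simp add: Sx G_def S_G[OF cs fb])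
  have JinvS: "J (inv S y) = G y" for y by (simp add: invS)
  have db: "hilbert_frame_bounds Iop (\<lambda>n. G (k n)) (1/B) (1/A)"
    unfolding G_def by (rule dual_bounds[OF cs fb])
  have d1: "(\<lambda>n. scaleC_cs Iop (cinner_cs Iop (G (k n)) x) (k n)) sums x" for x
    unfolding G_def by (rule dual1[OF cs fb])
  have d2: "(\<lambda>n. scaleC_cs Iop (cinner_cs Iop (k n) x) (G (k n))) sums x" for x
    unfolding G_def by (rule dual2[OF cs fb])
  have b1: "hilbert_frame_bounds Iop (\<lambda>n. inv S (k n)) (1/B) (1/A)"
    unfolding invS hfb_J by (rule db)
  have b2: "hilbert_frame_bounds Iop (\<lambda>n. J (inv S (k n))) (1/B) (1/A)"
    unfolding JinvS by (rule db)
  have kb1: "krein_frame_bounds kip (\<lambda>n. inv S (k n)) (1/B) (1/A)" using b1 kfb_hfb by blast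
  have kb2: "krein_frame_bounds kip (\<lambda>n. J (inv S (k n))) (1/B) (1/A)" using b2 kfb_hfb by blast
  have Jsums: "(\<lambda>n. J (u n)) sums J y" if "u sums y" for u y
    by (rule bounded_linear.sums[OF J_bl that])
  have r1: "(\<lambda>n. scaleC_cs Iop (kip (inv S (k n)) x) (k n)) sums x" for x
    using d1[of x] by (simp add: invS kip_cinner cinner_J)
  have r2: "(\<lambda>n. scaleC_cs Iop (kip (J (inv S (k n))) x) (J (k n))) sums x" for x
    using Jsums[OF d1[of "J x"]] by (simp add: JinvS kip_cinner scaleC_J)
  have r3: "(\<lambda>n. scaleC_cs Iop (cinner_cs Iop (J (inv S (k n))) x) (k n)) sums x" for x
    using d1[of x] by (simp add: JinvS)
  have r4: "(\<lambda>n. scaleC_cs Iop (cinner_cs Iop (k n) x) (J (inv S (k n)))) sums x" for x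
    using d2[of x] by (simp add: JinvS)
  have r5: "(\<lambda>n. scaleC_cs Iop (cinner_cs Iop (inv S (k n)) x) (J (k n))) sums x" for x
    using Jsums[OF d1[of "J x"]] by (simp add: invS cinner_J_left scaleC_J)
  have r6: "(\<lambda>n. scaleC_cs Iop (cinner_cs Iop (J (k n)) x) (inv S (k n))) sums x" for x
    using Jsums[OF d2[of "J x"]] by (simp add: invS cinner_J_left scaleC_J)
  show ?thesis
    unfolding krein_dual_frame_def hilbert_dual_frame_def krein_frame_def hilbert_frame_def
    using b1 b2 kb1 kb2 r1 r2 r3 r4 r5 r6 by blast
qed

end

theorem proposition3p8:
  fixes Iop J :: "'a::{real_inner,complete_space} \<Rightarrow> 'a"
    and kip :: "'a \<Rightarrow> 'a \<Rightarrow> complex"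
    and k :: "nat \<Rightarrow> 'a"
  assumes "krein_space Iop kip J"
    and "krein_frame kip k"
  defines "S \<equiv> frame_op Iop kip k"
  shows "krein_dual_frame Iop kip (\<lambda>n. inv S (k n)) k
       \<and> krein_dual_frame Iop kip (\<lambda>n. J (inv S (k n))) (\<lambda>n. J (k n))
       \<and> hilbert_dual_frame Iop (\<lambda>n. J (inv S (k n))) k
       \<and> hilbert_dual_frame Iop (\<lambda>n. inv S (k n)) (\<lambda>n. J (k n))
       \<and> (\<forall>A B. krein_frame_bounds kip k A B \<longrightarrow>
            krein_frame_bounds kip (\<lambda>n. inv S (k n)) (1 / B) (1 / A)
          \<and> krein_frame_bounds kip (\<lambda>n. J (inv S (k n))) (1 / B) (1 / A)
          \<and> hilbert_frame_bounds Iop (\<lambda>n. J (inv S (k n))) (1 / B) (1 / A)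
          \<and> hilbert_frame_bounds Iop (\<lambda>n. inv S (k n)) (1 / B) (1 / A))"
proof -
  obtain A0 B0 where "krein_frame_bounds kip k A0 B0" using assms(2) unfolding krein_frame_def by blast
  from main[OF assms(1) this] have h1: "krein_dual_frame Iop kip (\<lambda>n. inv S (k n)) k
       \<and> krein_dual_frame Iop kip (\<lambda>n. J (inv S (k n))) (\<lambda>n. J (k n))
       \<and> hilbert_dual_frame Iop (\<lambda>n. J (inv S (k n))) k
       \<and> hilbert_dual_frame Iop (\<lambda>n. inv S (k n)) (\<lambda>n. J (k n))"
    unfolding S_def by blast
  have h2: "\<forall>A B. krein_frame_bounds kip k A B \<longrightarrow>
            krein_frame_bounds kip (\<lambda>n. inv S (k n)) (1 / B) (1 / A)
          \<and> krein_frame_bounds kip (\<lambda>n. J (inv S (k n))) (1 / B) (1 / A)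
          \<and> hilbert_frame_bounds Iop (\<lambda>n. J (inv S (k n))) (1 / B) (1 / A)
          \<and> hilbert_frame_bounds Iop (\<lambda>n. inv S (k n)) (1 / B) (1 / A)"
  proof (intro allI impI)
    fix A B assume "krein_frame_bounds kip k A B"
    from main[OF assms(1) this] show "krein_frame_bounds kip (\<lambda>n. inv S (k n)) (1 / B) (1 / A)
          \<and> krein_frame_bounds kip (\<lambda>n. J (inv S (k n))) (1 / B) (1 / A)
          \<and> hilbert_frame_bounds Iop (\<lambda>n. J (inv S (k n))) (1 / B) (1 / A)
          \<and> hilbert_frame_bounds Iop (\<lambda>n. inv S (k n)) (1 / B) (1 / A)"
      unfolding S_def by blast
  qed
  from h1 h2 show ?thesis by blast
qed

end
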